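(* Let $B$, $B_u$ be solutions on $[0,T]$ of the constrained and unconstrained ODEs of the context, and let $\pi^\ast,\hat\pi^\ast,\pi_u,\pi_M$ be as in the context. (i) If $0<\pi_M=\frac\alpha2<\alpha$ and $\alpha<\pi_u(t^\ast)<\beta$ for some $t^\ast\in[0,T]$, then $B(\tau)=0$ for all $\tau\in[0,T]$, $\pi^\ast(t)=\alpha$ for all $t\in[0,T]$, and the functions $\pi^\ast$ and $t\mapsto\mathrm{Cap}(\pi_u(t),\alpha,\beta)$ on $[0,T]$ are not identical. (ii) If $\pi_M>\beta>0$, then $\mathrm{sign}(\frac{\partial}{\partial t}\hat\pi^\ast(t))=\mathrm{sign}(\frac{\partial}{\partial t}\pi_u(t))=-\mathrm{sign}(\rho b)$ for all $t\in[0,T]$. Hence, if in addition $b<0$ and $\rho<0$, then $\pi^\ast(t)=\mathrm{Cap}(\pi_u(t),\alpha,\beta)$ for all $t\in[0,T]$.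
   Context: Parameters: $T>0$; $\eta,\kappa,\sigma>0$; $\rho\in(-1,1)$; $b<1$, $b\ne0$; $K=[\alpha,\beta]$, $-\infty\le\alpha<\beta\le\infty$; $\delta_K(x)=-\alpha x\mathbf 1_{\{x>0\}}-\beta x\mathbf 1_{\{x<0\}}$. $B_-=\frac{(1-b)\alpha-\eta}\sigma$, $B_+=\frac{(1-b)\beta-\eta}\sigma$; $r_0=-\frac b{2(1-b)}\eta^2$, $r_1=\frac b{1-b}\eta\sigma\rho-\kappa$, $r_2=\sigma^2(1+\frac b{1-b}\rho^2)$. Constrained ODE: $B'(\tau)=-\kappa B+\frac12\sigma^2B^2+\frac12\frac b{1-b}\inf_{\lambda\in\mathbb R}(2(1-b)\delta_K(\lambda)+(\eta+\lambda+\sigma\rho B)^2)$, $B(0)=0$. Unconstrained ODE: $B_u'(\tau)=-r_0+r_1B_u+\frac12r_2B_u^2$, $B_u(0)=0$. $\lambda^\ast(B)=[(1-b)\alpha-(\eta+\sigma\rho B)]\mathbf 1_{\{\rho B<B_-\}}+[(1-b)\beta-(\eta+\sigma\rho B)]\mathbf 1_{\{\rho B>B_+\}}$; $\pi^\ast(t)=\frac1{1-b}(\eta+\lambda^\ast(B(T-t))+\sigma\rho B(T-t))$; $\hat\pi^\ast(t)=\frac1{1-b}(\eta+\sigma\rho B(T-t))$; $\pi_u(t)=\frac1{1-b}(\eta+\sigma\rho B_u(T-t))$; $\pi_M=\frac\eta{1-b}$; $\mathrm{Cap}(x,\alpha,\beta)=\alpha$ if $x<\alpha$, $x$ if $\alpha\le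 x\le\beta$, $\beta$ if $x>\beta$; $\mathrm{sign}(x)\in\{-1,0,1\}$. *)

theory Defs
  imports "HOL-Analysis.Analysis"
begin

definition deltaK :: "ereal \<Rightarrow> ereal \<Rightarrow> real \<Rightarrow> ereal" where
  "deltaK \<alpha> \<beta> x =
     (if x > 0 then - \<alpha> * ereal x else 0) + (if x < 0 then - \<beta> * ereal x else 0)"

definition rhs_c :: "real \<Rightarrow> real \<Rightarrow> real \<Rightarrow> real \<Rightarrow> real \<Rightarrow> ereal \<Rightarrow> ereal \<Rightarrow> real \<Rightarrow> real" where
  "rhs_c \<eta> \<kappa> \<sigma> \<rho> b \<alpha> \<beta> B =
     - \<kappa> * B + 1/2 * \<sigma>^2 * B^2
     + 1/2 * (b / (1 - b)) *
       real_of_ereal (INF l. ereal (2 * (1 - b)) * deltaK \<alpha> \<beta> l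
                              + ereal ((\<eta> + l + \<sigma> * \<rho> * B)^2))"

definition r0 :: "real \<Rightarrow> real \<Rightarrow> real" where
  "r0 \<eta> b = - b / (2 * (1 - b)) * \<eta>^2"

definition r1 :: "real \<Rightarrow> real \<Rightarrow> real \<Rightarrow> real \<Rightarrow> real \<Rightarrow> real" where
  "r1 \<eta> \<kappa> \<sigma> \<rho> b = b / (1 - b) * \<eta> * \<sigma> * \<rho> - \<kappa>"

definition r2 :: "real \<Rightarrow> real \<Rightarrow> real \<Rightarrow> real" where
  "r2 \<sigma> \<rho> b = \<sigma>^2 * (1 + b / (1 - b) * \<rho>^2)"

definition rhs_u :: "real \<Rightarrow> real \<Rightarrow> real \<Rightarrow> real \<Rightarrow> real \<Rightarrow> real \<Rightarrow> real" where
  "rhs_u \<eta> \<kappa> \<sigma> \<rho> b B = - r0 \<eta> b + r1 \<eta> \<kappa> \<sigma> \<rho> b * B + 1/2 * r2 \<sigma> \<rho> b * B^2"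

definition Bminus :: "real \<Rightarrow> real \<Rightarrow> real \<Rightarrow> ereal \<Rightarrow> ereal" where
  "Bminus \<eta> \<sigma> b \<alpha> = (ereal (1 - b) * \<alpha> - ereal \<eta>) / ereal \<sigma>"

definition Bplus :: "real \<Rightarrow> real \<Rightarrow> real \<Rightarrow> ereal \<Rightarrow> ereal" where
  "Bplus \<eta> \<sigma> b \<beta> = (ereal (1 - b) * \<beta> - ereal \<eta>) / ereal \<sigma>"

definition lambda_star :: "real \<Rightarrow> real \<Rightarrow> real \<Rightarrow> real \<Rightarrow> ereal \<Rightarrow> ereal \<Rightarrow> real \<Rightarrow> real" where
  "lambda_star \<eta> \<sigma> \<rho> b \<alpha> \<beta> B =
     (if ereal (\<rho> * B) < Bminus \<eta> \<sigma> b \<alpha>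
      then real_of_ereal (ereal (1 - b) * \<alpha>) - (\<eta> + \<sigma> * \<rho> * B) else 0)
   + (if ereal (\<rho> * B) > Bplus \<eta> \<sigma> b \<beta>
      then real_of_ereal (ereal (1 - b) * \<beta>) - (\<eta> + \<sigma> * \<rho> * B) else 0)"

definition pi_star :: "real \<Rightarrow> real \<Rightarrow> real \<Rightarrow> real \<Rightarrow> ereal \<Rightarrow> ereal \<Rightarrow> real \<Rightarrow> (real \<Rightarrow> real) \<Rightarrow> real \<Rightarrow> real" where
  "pi_star \<eta> \<sigma> \<rho> b \<alpha> \<beta> T B t =
     1 / (1 - b) * (\<eta> + lambda_star \<eta> \<sigma> \<rho> b \<alpha> \<beta> (B (T - t)) + \<sigma> * \<rho> * B (T - t))"

definition pi_hat :: "real \<Rightarrow> real \<Rightarrow> real \<Rightarrow> real \<Rightarrow> real \<Rightarrow> (real \<Rightarrow> real) \<Rightarrow> real \<Rightarrow> real" where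
  "pi_hat \<eta> \<sigma> \<rho> b T B t = 1 / (1 - b) * (\<eta> + \<sigma> * \<rho> * B (T - t))"

definition pi_u :: "real \<Rightarrow> real \<Rightarrow> real \<Rightarrow> real \<Rightarrow> real \<Rightarrow> (real \<Rightarrow> real) \<Rightarrow> real \<Rightarrow> real" where
  "pi_u \<eta> \<sigma> \<rho> b T Bu t = 1 / (1 - b) * (\<eta> + \<sigma> * \<rho> * Bu (T - t))"

definition pi_M :: "real \<Rightarrow> real \<Rightarrow> real" where
  "pi_M \<eta> b = \<eta> / (1 - b)"

definition Cap :: "real \<Rightarrow> ereal \<Rightarrow> ereal \<Rightarrow> real" where
  "Cap x \<alpha> \<beta> = (if ereal x < \<alpha> then real_of_ereal \<alpha>
                   else if ereal x \<le> \<beta> then x else real_of_ereal \<beta>)"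

end

theory Submission
  imports Defs
begin

lemma mono_deriv:
  fixes W W' :: "real \<Rightarrow> real"
  assumes d: "\<forall>\<tau>\<in>{0..T}. (W has_real_derivative W' \<tau>) (at \<tau> within {0..T})"
    and p: "\<forall>\<tau>\<in>{0..T}. W' \<tau> \<ge> 0" and uv: "0 \<le> u" "u \<le> v" "v \<le> T"
  shows "W u \<le> W v"
proof -
  have c: "continuous_on {0..T} W"
    using d by (auto simp: continuous_on_eq_continuous_within intro: DERIV_continuous)
  show ?thesis
  proof (rule DERIV_nonneg_imp_increasing_open[OF uv(2)])
    fix x assume x: "u < x" "x < v"
    hence "at x within {0..T} = at x" using uv by (intro at_within_Icc_at) auto
    thus "\<exists>y. DERIV W x :> y \<and> 0 \<le> y" using d p x uv by (metis atLeastAtMost_iff less_eq_real_def order.trans)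
  next
    show "continuous_on {u..v} W" by (rule continuous_on_subset[OF c]) (use uv in auto)
  qed
qed

lemma prod_bound:
  fixes x y L :: real
  assumes "\<bar>y\<bar> \<le> L * \<bar>x\<bar>"
  shows "x * y \<le> L * x^2" "x * y \<ge> - L * x^2"
proof -
  have "\<bar>x * y\<bar> \<le> \<bar>x\<bar> * (L * \<bar>x\<bar>)"
    unfolding abs_mult by (rule mult_left_mono[OF assms]) simp
  also have "\<dots> = L * x^2" by (simp add: power2_eq_square abs_mult_self_eq algebra_simps)
  finally have "\<bar>x * y\<bar> \<le> L * x^2" .
  thus "x * y \<le> L * x^2" "x * y \<ge> - L * x^2" by linarith+
qed

lemma fwd_unique:
  fixes B f :: "real \<Rightarrow> real"
  assumes d: "\<forall>\<tau>\<in>{0..T}. (B has_real_derivative f (B \<tau>)) (at \<tau> within {0..T})"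
    and L: "L \<ge> 0" "\<forall>x. \<bar>x\<bar> \<le> R \<longrightarrow> \<bar>f x\<bar> \<le> L * \<bar>x\<bar>"
    and R: "\<forall>\<tau>\<in>{0..T}. \<bar>B \<tau>\<bar> \<le> R" and B0: "B 0 = 0"
  shows "\<forall>\<tau>\<in>{0..T}. B \<tau> = 0"
proof
  fix \<tau> assume t: "\<tau> \<in> {0..T}"
  define W where "W = (\<lambda>t. - ((B t)^2 * exp (-2*L*t)))"
  define W' where "W' = (\<lambda>t. - (2 * B t * f (B t) * exp (-2*L*t) + (B t)^2 * (exp (-2*L*t) * (-2*L))))"
  have "\<forall>t\<in>{0..T}. (W has_real_derivative W' t) (at t within {0..T})"
  proof
    fix t assume "t \<in> {0..T}"
    with d have "(B has_real_derivative f (B t)) (at t within {0..T})" by auto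
    then show "(W has_real_derivative W' t) (at t within {0..T})"
      unfolding W_def W'_def
      by (auto intro!: derivative_eq_intros)
  qed
  moreover have "\<forall>t\<in>{0..T}. W' t \<ge> 0"
  proof
    fix t assume "t \<in> {0..T}"
    hence "\<bar>f (B t)\<bar> \<le> L * \<bar>B t\<bar>" using L R by auto
    hence "B t * f (B t) \<le> L * (B t)^2"
      by (rule prod_bound)
    hence "2 * B t * f (B t) + (B t)^2 * (-2*L) \<le> 0" by (simp add: algebra_simps)
    hence "(2 * B t * f (B t) + (B t)^2 * (-2*L)) * exp (-2*L*t) \<le> 0"
      by (simp add: mult_nonpos_nonneg)
    thus "W' t \<ge> 0" unfolding W'_def by (simp add: algebra_simps)
  qed
  ultimately have "W 0 \<le> W \<tau>" using t by (intro mono_deriv[of T W W']) auto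
  hence "(B \<tau>)^2 * exp (-2*L*\<tau>) \<le> 0" using B0 unfolding W_def by simp
  hence "(B \<tau>)^2 \<le> 0" by (simp add: mult_le_0_iff)
  thus "B \<tau> = 0" by simp
qed

lemma bwd_unique:
  fixes B f :: "real \<Rightarrow> real"
  assumes d: "\<forall>\<tau>\<in>{0..T}. (B has_real_derivative f (B \<tau>)) (at \<tau> within {0..T})"
    and L: "L \<ge> 0" "\<forall>x y. \<bar>x\<bar> \<le> R \<longrightarrow> \<bar>y\<bar> \<le> R \<longrightarrow> \<bar>f x - f y\<bar> \<le> L * \<bar>x - y\<bar>"
    and R: "\<forall>\<tau>\<in>{0..T}. \<bar>B \<tau>\<bar> \<le> R" and s: "s \<in> {0..T}" and fs: "f (B s) = 0"
  shows "f (B 0) = 0"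
proof -
  define W where "W = (\<lambda>t. ((B t - B s)^2 * exp (2*L*t)))"
  define W' where "W' = (\<lambda>t. (2 * (B t - B s) * f (B t) * exp (2*L*t) + (B t - B s)^2 * (exp (2*L*t) * (2*L))))"
  have "\<forall>t\<in>{0..T}. (W has_real_derivative W' t) (at t within {0..T})"
  proof
    fix t assume "t \<in> {0..T}"
    with d have "(B has_real_derivative f (B t)) (at t within {0..T})" by auto
    then show "(W has_real_derivative W' t) (at t within {0..T})"
      unfolding W_def W'_def
      by (auto intro!: derivative_eq_intros)
  qed
  moreover have "\<forall>t\<in>{0..T}. W' t \<ge> 0"
  proof
    fix t assume t: "t \<in> {0..T}"
    hence "\<bar>f (B t) - f (B s)\<bar> \<le> L * \<bar>B t - B s\<bar>" using L R s by auto
    hence "\<bar>f (B t)\<bar> \<le> L * \<bar>B t - B s\<bar>" using fs by simp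
    hence "(B t - B s) * f (B t) \<ge> - L * (B t - B s)^2"
      by (rule prod_bound)
    hence "2 * (B t - B s) * f (B t) + (B t - B s)^2 * (2*L) \<ge> 0" by (simp add: algebra_simps)
    hence "(2 * (B t - B s) * f (B t) + (B t - B s)^2 * (2*L)) * exp (2*L*t) \<ge> 0"
      by simp
    thus "W' t \<ge> 0" unfolding W'_def by (simp add: algebra_simps)
  qed
  ultimately have "W 0 \<le> W s" using s by (intro mono_deriv[of T W W']) auto
  hence "(B 0 - B s)^2 \<le> 0" unfolding W_def by simp
  hence "B 0 = B s" by simp
  thus ?thesis using fs by simp
qed

lemma sign_const:
  fixes B f :: "real \<Rightarrow> real"
  assumes d: "\<forall>\<tau>\<in>{0..T}. (B has_real_derivative f (B \<tau>)) (at \<tau> within {0..T})"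
    and L: "L \<ge> 0" "\<forall>x y. \<bar>x\<bar> \<le> R \<longrightarrow> \<bar>y\<bar> \<le> R \<longrightarrow> \<bar>f x - f y\<bar> \<le> L * \<bar>x - y\<bar>"
    and R: "\<forall>\<tau>\<in>{0..T}. \<bar>B \<tau>\<bar> \<le> R" and s: "s \<in> {0..T}" and f0: "f (B 0) \<noteq> 0"
  shows "sgn (f (B s)) = sgn (f (B 0))"
proof -
  have cB: "continuous_on {0..T} B"
    using d by (auto simp: continuous_on_eq_continuous_within intro: DERIV_continuous)
  have "lipschitz_on L {-R..R} f" using L by (auto simp: lipschitz_on_def dist_real_def)
  hence cf: "continuous_on {-R..R} f" by (rule lipschitz_on_continuous_on)
  have cfB: "continuous_on {0..T} (\<lambda>t. f (B t))"
    by (rule continuous_on_compose2[OF cf cB]) (use R in \<open>force simp: abs_le_iff\<close>)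
  have c: "continuous_on {0..s} (\<lambda>t. f (B t))" by (rule continuous_on_subset[OF cfB]) (use s in auto)
  have nz: "f (B t) \<noteq> 0" if "t \<in> {0..s}" for t
    using bwd_unique[OF d L R, of t] f0 that s by auto
  have "f (B s) \<noteq> 0" using nz s by auto
  moreover have "\<not> (f (B 0) < 0 \<and> f (B s) > 0)"
    using IVT'[of "\<lambda>t. f (B t)" 0 0 s] c nz s by force
  moreover have "\<not> (f (B 0) > 0 \<and> f (B s) < 0)"
    using IVT2'[of "\<lambda>t. f (B t)" s 0 0] c nz s by force
  ultimately show ?thesis using f0 by (auto simp: sgn_if) 
qed

definition clampE :: "ereal \<Rightarrow> ereal \<Rightarrow> real \<Rightarrow> real" where
  "clampE a bb c = (if ereal c < a then real_of_ereal a else if bb < ereal c then real_of_ereal bb else c)"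

lemma clampE_props:
  assumes ab: "a < bb"
  shows "a \<le> ereal (clampE a bb c)" "ereal (clampE a bb c) \<le> bb"
    "clampE a bb c > c \<Longrightarrow> a = ereal (clampE a bb c)"
    "clampE a bb c < c \<Longrightarrow> bb = ereal (clampE a bb c)"
proof -
  have fa: "ereal c < a \<Longrightarrow> ereal (real_of_ereal a) = a" using ab
    by (cases a) auto
  have fb: "bb < ereal c \<Longrightarrow> ereal (real_of_ereal bb) = bb" using ab
    by (cases bb) auto
  show "a \<le> ereal (clampE a bb c)"
    using fa fb ab unfolding clampE_def by (auto simp: not_less)
  show "ereal (clampE a bb c) \<le> bb"
    using fa fb ab unfolding clampE_def by (auto simp: not_less)
  show "clampE a bb c > c \<Longrightarrow> a = ereal (clampE a bb c)"
  proof -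
    assume h: "clampE a bb c > c"
    have "\<not> bb < ereal c \<or> ereal c < a"
    proof (rule ccontr)
      assume "\<not> (\<not> bb < ereal c \<or> ereal c < a)"
      hence "bb < ereal c" "\<not> ereal c < a" by auto
      hence "clampE a bb c = real_of_ereal bb" unfolding clampE_def by simp
      hence "ereal (clampE a bb c) < ereal c" using fb \<open>bb < ereal c\<close> by simp
      thus False using h by simp
    qed
    thus ?thesis using fa h unfolding clampE_def by (auto split: if_splits)
  qed
  show "clampE a bb c < c \<Longrightarrow> bb = ereal (clampE a bb c)"
  proof -
    assume h: "clampE a bb c < c"
    have "\<not> ereal c < a"
    proof
      assume "ereal c < a"
      hence "clampE a bb c = real_of_ereal a" unfolding clampE_def by simp
      hence "ereal (clampE a bb c) > ereal c" using fa \<open>ereal c < a\<close> by simp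
      thus False using h by simp
    qed
    thus ?thesis using fb h unfolding clampE_def by (auto split: if_splits)
  qed
qed
lemma K1:
  fixes p m l :: real and \<alpha> \<beta> :: ereal
  assumes p: "p > 0" and am: "ereal p * \<alpha> \<le> ereal m" and bm: "ereal m \<le> ereal p * \<beta>"
  shows "ereal (2*p) * deltaK \<alpha> \<beta> l \<ge> ereal (-2 * m * l)"
proof (cases "l > 0")
  case True
  hence d: "deltaK \<alpha> \<beta> l = - \<alpha> * ereal l" by (simp add: deltaK_def)
  show ?thesis
  proof (cases \<alpha>)
    case (real ra)
    with am have "p * ra \<le> m" by simp
    hence h: "p * ra * l \<le> m * l" using True by (intro mult_right_mono) auto
    have e: "2*p*(-ra*l) = -2*(p*ra*l)" "-2*m*l = -2*(m*l)" by (simp_all add: algebra_simps)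
    have "-2 * m * l \<le> 2 * p * (- ra * l)" unfolding e using h by linarith
    thus ?thesis using d real by simp
  next
    case PInf thus ?thesis using am p by simp
  next
    case MInf thus ?thesis using d True p by simp
  qed
next
  case False
  show ?thesis
  proof (cases "l = 0")
    case True thus ?thesis by (simp add: deltaK_def)
  next
    case False
    with \<open>\<not> l > 0\<close> have l: "l < 0" by simp
    hence d: "deltaK \<alpha> \<beta> l = - \<beta> * ereal l" by (simp add: deltaK_def)
    show ?thesis
    proof (cases \<beta>)
      case (real rb)
      with bm have "m \<le> p * rb" by simp
      hence h: "p * rb * l \<le> m * l" using l by (intro mult_right_mono_neg) auto
      have e: "2*p*(-rb*l) = -2*(p*rb*l)" "-2*m*l = -2*(m*l)" by (simp_all add: algebra_simps)
      have "-2 * m * l \<le> 2 * p * (- rb * l)" unfolding e using h by linarith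
      thus ?thesis using d real by simp
    next
      case PInf thus ?thesis using d l p by simp
    next
      case MInf thus ?thesis using bm p by simp
    qed
  qed
qed


lemma K2:
  fixes p c :: real and \<alpha> \<beta> :: ereal
  assumes p: "p > 0" and ab: "\<alpha> < \<beta>"
  defines "m \<equiv> clampE (ereal p * \<alpha>) (ereal p * \<beta>) c"
  shows "ereal (2*p) * deltaK \<alpha> \<beta> (m - c) = ereal (-2 * m * (m - c))"
proof -
  have ab': "ereal p * \<alpha> < ereal p * \<beta>"
    using ab p by (intro ereal_mult_strict_left_mono) auto
  note cp = clampE_props[OF ab', of c, folded m_def]
  consider "m > c" | "m < c" | "m = c" by linarith
  thus ?thesis
  proof cases
    case 1
    hence a: "ereal p * \<alpha> = ereal m" using cp by simp
    then obtain ra where ra: "\<alpha> = ereal ra" using p by (cases \<alpha>) auto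
    hence pm: "p * ra = m" using a by simp
    have "deltaK \<alpha> \<beta> (m - c) = ereal (- ra * (m - c))" using 1 ra by (simp add: deltaK_def)
    hence "ereal (2*p) * deltaK \<alpha> \<beta> (m - c) = ereal (-2 * (p * ra) * (m - c))" by (simp add: algebra_simps)
    thus ?thesis using pm by simp
  next
    case 2
    hence a: "ereal p * \<beta> = ereal m" using cp by simp
    then obtain rb where rb: "\<beta> = ereal rb" using p by (cases \<beta>) auto
    hence pm: "p * rb = m" using a by simp
    have "deltaK \<alpha> \<beta> (m - c) = ereal (- rb * (m - c))" using 2 rb by (simp add: deltaK_def)
    hence "ereal (2*p) * deltaK \<alpha> \<beta> (m - c) = ereal (-2 * (p * rb) * (m - c))" by (simp add: algebra_simps)
    thus ?thesis using pm by simp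
  next
    case 3 thus ?thesis by (simp add: deltaK_def)
  qed
qed

lemma inf_closed:
  fixes b e d :: real and \<alpha> \<beta> :: ereal
  assumes b: "b < 1" and ab: "\<alpha> < \<beta>"
  shows "real_of_ereal (INF l. ereal (2 * (1 - b)) * deltaK \<alpha> \<beta> l + ereal ((e + l + d)^2))
     = (e + d)^2 - ((e + d) - clampE (ereal (1 - b) * \<alpha>) (ereal (1 - b) * \<beta>) (e + d))^2"
proof -
  define p where "p = 1 - b"
  have p: "p > 0" using b p_def by simp
  define c where "c = e + d"
  define m where "m = clampE (ereal p * \<alpha>) (ereal p * \<beta>) c"
  have ab': "ereal p * \<alpha> < ereal p * \<beta>"
    using ab p by (intro ereal_mult_strict_left_mono) auto
  note cp = clampE_props[OF ab', of c, folded m_def]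
  define G where "G = (\<lambda>l. ereal (2 * p) * deltaK \<alpha> \<beta> l + ereal ((c + l)^2))"
  have low: "G l \<ge> ereal (c^2 - (c - m)^2)" for l
  proof -
    have "ereal (2 * p) * deltaK \<alpha> \<beta> l \<ge> ereal (-2 * m * l)"
      by (rule K1[OF p cp(1) cp(2)])
    hence "G l \<ge> ereal (-2 * m * l) + ereal ((c + l)^2)" unfolding G_def
      by (intro add_right_mono) auto
    moreover have "-2 * m * l + (c + l)^2 \<ge> c^2 - (c - m)^2"
    proof -
      have "-2 * m * l + (c + l)^2 - (c^2 - (c - m)^2) = (l + c - m)^2"
        by (simp add: power2_eq_square algebra_simps)
      thus ?thesis by (metis diff_ge_0_iff_ge zero_le_power2)
    qed
    ultimately show ?thesis by (metis order_trans plus_ereal.simps(1) ereal_less_eq(3))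
  qed
  have at: "G (m - c) = ereal (c^2 - (c - m)^2)"
  proof -
    have "G (m - c) = ereal (-2 * m * (m - c)) + ereal ((c + (m - c))^2)"
      unfolding G_def m_def by (subst K2[OF p ab]) simp
    also have "\<dots> = ereal (c^2 - (c - m)^2)" by (simp add: power2_eq_square algebra_simps)
    finally show ?thesis .
  qed
  have INFG: "(INF l. G l) = ereal (c^2 - (c - m)^2)"
  proof (rule antisym)
    show "(INF l. G l) \<le> ereal (c^2 - (c - m)^2)" using at by (metis INF_lower UNIV_I)
    show "ereal (c^2 - (c - m)^2) \<le> (INF l. G l)" using low by (intro INF_greatest) auto
  qed
  have eqG: "(INF l. ereal (2 * (1 - b)) * deltaK \<alpha> \<beta> l + ereal ((e + l + d)^2)) = (INF l. G l)"
    unfolding G_def p_def c_def by (simp add: algebra_simps)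
  show ?thesis unfolding eqG INFG by (simp add: c_def m_def p_def)
qed


lemma clamp_lip:
  assumes ab: "a < bb" and cc: "c \<le> c'"
  shows "clampE a bb c \<le> clampE a bb c'" "clampE a bb c' - clampE a bb c \<le> c' - c"
proof -
  define m where "m = clampE a bb c"
  define m' where "m' = clampE a bb c'"
  note cp = clampE_props[OF ab, of c, folded m_def]
  note cp' = clampE_props[OF ab, of c', folded m'_def]
  have F1: "m > c \<Longrightarrow> m \<le> m'" using cp cp' by (metis ereal_less_eq(3))
  have F2: "m' > c' \<Longrightarrow> m' \<le> m" using cp cp' by (metis ereal_less_eq(3))
  have F3: "m < c \<Longrightarrow> m' \<le> m" using cp cp' by (metis ereal_less_eq(3))
  have F4: "m' < c' \<Longrightarrow> m \<le> m'" using cp cp' by (metis ereal_less_eq(3))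
  show "m \<le> m'"
    using F1 F2 F3 F4 cc by (cases "m > c"; cases "m < c"; cases "m' > c'"; cases "m' < c'") auto
  show "m' - m \<le> c' - c"
    using F1 F2 F3 F4 cc by (cases "m > c"; cases "m < c"; cases "m' > c'"; cases "m' < c'") auto
qed

lemma d_lip:
  assumes ab: "a < bb"
  shows "\<bar>(c - clampE a bb c) - (c' - clampE a bb c')\<bar> \<le> \<bar>c - c'\<bar>"
proof (cases "c \<le> c'")
  case True
  from clamp_lip[OF ab True] show ?thesis by linarith
next
  case False
  hence "c' \<le> c" by simp
  from clamp_lip[OF ab this] show ?thesis by linarith
qed

lemma d_bound:
  assumes ab: "a < bb"
  shows "\<bar>c - clampE a bb c\<bar> \<le> \<bar>c\<bar> + \<bar>real_of_ereal a\<bar> + \<bar>real_of_ereal bb\<bar>"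
proof -
  have F: "\<bar>c - real_of_ereal a\<bar> \<le> \<bar>c\<bar> + \<bar>real_of_ereal a\<bar>" "\<bar>c - real_of_ereal bb\<bar> \<le> \<bar>c\<bar> + \<bar>real_of_ereal bb\<bar>"
    "0 \<le> \<bar>real_of_ereal a\<bar>" "0 \<le> \<bar>real_of_ereal bb\<bar>" "0 \<le> \<bar>c\<bar>"
    by (rule abs_triangle_ineq4 abs_ge_zero)+
  consider (1) "clampE a bb c = real_of_ereal a" | (2) "clampE a bb c = real_of_ereal bb" | (3) "clampE a bb c = c"
    unfolding clampE_def by (cases "ereal c < a"; cases "bb < ereal c") auto
  then show ?thesis
  proof cases
    case 1 show ?thesis unfolding 1 using F by linarith
  next
    case 2 show ?thesis unfolding 2 using F by linarith
  next
    case 3 show ?thesis unfolding 3 using F by linarith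
  qed
qed

lemma sq_lip:
  fixes u v :: real
  shows "\<bar>u^2 - v^2\<bar> \<le> \<bar>u - v\<bar> * (\<bar>u\<bar> + \<bar>v\<bar>)"
proof -
  have "\<bar>u^2 - v^2\<bar> = \<bar>u - v\<bar> * \<bar>u + v\<bar>"
    by (simp add: power2_eq_square algebra_simps abs_mult[symmetric])
  also have "\<dots> \<le> \<bar>u - v\<bar> * (\<bar>u\<bar> + \<bar>v\<bar>)"
    by (intro mult_left_mono abs_triangle_ineq) simp
  finally show ?thesis .
qed


definition Ic :: "ereal \<Rightarrow> ereal \<Rightarrow> real \<Rightarrow> real" where
  "Ic a bb c = c^2 - (c - clampE a bb c)^2"

lemma rhs_c_eq:
  assumes "b < 1" "\<alpha> < \<beta>"
  shows "rhs_c \<eta> \<kappa> \<sigma> \<rho> b \<alpha> \<beta> x = - \<kappa> * x + 1/2 * \<sigma>^2 * x^2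
     + 1/2 * (b / (1 - b)) * Ic (ereal (1 - b) * \<alpha>) (ereal (1 - b) * \<beta>) (\<eta> + \<sigma> * \<rho> * x)"
  unfolding rhs_c_def Ic_def inf_closed[OF assms, of \<eta> "\<sigma> * \<rho> * x"] ..

lemma Ic_lip:
  assumes ab: "a < bb"
  shows "\<bar>Ic a bb c - Ic a bb c'\<bar> \<le> \<bar>c - c'\<bar> * (2 * \<bar>c\<bar> + 2 * \<bar>c'\<bar> + 2 * (\<bar>real_of_ereal a\<bar> + \<bar>real_of_ereal bb\<bar>))"
proof -
  define d where "d = c - clampE a bb c"
  define d' where "d' = c' - clampE a bb c'"
  define K where "K = \<bar>real_of_ereal a\<bar> + \<bar>real_of_ereal bb\<bar>"
  have dd: "\<bar>d - d'\<bar> \<le> \<bar>c - c'\<bar>" unfolding d_def d'_def by (rule d_lip[OF ab])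
  have db: "\<bar>d\<bar> \<le> \<bar>c\<bar> + K" "\<bar>d'\<bar> \<le> \<bar>c'\<bar> + K"
    unfolding d_def d'_def K_def using d_bound[OF ab] by (simp_all add: add.assoc)
  have "\<bar>Ic a bb c - Ic a bb c'\<bar> = \<bar>(c^2 - c'^2) - (d^2 - d'^2)\<bar>"
    unfolding Ic_def d_def d'_def by (simp add: algebra_simps)
  also have "\<dots> \<le> \<bar>c^2 - c'^2\<bar> + \<bar>d^2 - d'^2\<bar>" by (rule abs_triangle_ineq4)
  also have "\<dots> \<le> \<bar>c - c'\<bar> * (\<bar>c\<bar> + \<bar>c'\<bar>) + \<bar>d - d'\<bar> * (\<bar>d\<bar> + \<bar>d'\<bar>)"
    by (intro add_mono sq_lip)
  also have "\<dots> \<le> \<bar>c - c'\<bar> * (\<bar>c\<bar> + \<bar>c'\<bar>) + \<bar>c - c'\<bar> * (\<bar>c\<bar> + \<bar>c'\<bar> + 2 * K)"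
    using dd db by (intro add_left_mono mult_mono) auto
  also have "\<dots> = \<bar>c - c'\<bar> * (2 * \<bar>c\<bar> + 2 * \<bar>c'\<bar> + 2 * K)" by (simp add: algebra_simps)
  finally show ?thesis unfolding K_def .
qed

lemma rhs_c_lip:
  assumes b: "b < 1" and ab: "\<alpha> < \<beta>"
  shows "\<exists>L\<ge>0. \<forall>x y. \<bar>x\<bar> \<le> R \<longrightarrow> \<bar>y\<bar> \<le> R \<longrightarrow>
     \<bar>rhs_c \<eta> \<kappa> \<sigma> \<rho> b \<alpha> \<beta> x - rhs_c \<eta> \<kappa> \<sigma> \<rho> b \<alpha> \<beta> y\<bar> \<le> L * \<bar>x - y\<bar>"
proof -
  define a where "a = ereal (1 - b) * \<alpha>"
  define bb where "bb = ereal (1 - b) * \<beta>"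
  have ab': "a < bb" unfolding a_def bb_def using ab b by (intro ereal_mult_strict_left_mono) auto
  define K where "K = \<bar>real_of_ereal a\<bar> + \<bar>real_of_ereal bb\<bar>"
  define k where "k = b / (1 - b)"
  define Cr where "Cr = \<bar>\<eta>\<bar> + \<bar>\<sigma> * \<rho>\<bar> * \<bar>R\<bar>"
  define L where "L = \<bar>\<kappa>\<bar> + 1/2 * \<sigma>^2 * (2 * \<bar>R\<bar>) + 1/2 * \<bar>k\<bar> * (\<bar>\<sigma> * \<rho>\<bar> * (4 * Cr + 2 * K))"
  have K0: "K \<ge> 0" unfolding K_def by (intro add_nonneg_nonneg abs_ge_zero)
  have L0: "L \<ge> 0" unfolding L_def Cr_def using K0 by (intro add_nonneg_nonneg mult_nonneg_nonneg) simp_all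
  have "\<bar>rhs_c \<eta> \<kappa> \<sigma> \<rho> b \<alpha> \<beta> x - rhs_c \<eta> \<kappa> \<sigma> \<rho> b \<alpha> \<beta> y\<bar> \<le> L * \<bar>x - y\<bar>"
    if x: "\<bar>x\<bar> \<le> R" and y: "\<bar>y\<bar> \<le> R" for x y
  proof -
    define cx where "cx = \<eta> + \<sigma> * \<rho> * x"
    define cy where "cy = \<eta> + \<sigma> * \<rho> * y"
    have cxy: "\<bar>cx - cy\<bar> = \<bar>\<sigma> * \<rho>\<bar> * \<bar>x - y\<bar>"
      unfolding cx_def cy_def by (simp add: abs_mult[symmetric] algebra_simps)
    have "\<bar>\<sigma> * \<rho> * x\<bar> \<le> \<bar>\<sigma> * \<rho>\<bar> * \<bar>R\<bar>" "\<bar>\<sigma> * \<rho> * y\<bar> \<le> \<bar>\<sigma> * \<rho>\<bar> * \<bar>R\<bar>"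
      using x y by (auto simp: abs_mult intro!: mult_left_mono)
    hence cb: "\<bar>cx\<bar> \<le> Cr" "\<bar>cy\<bar> \<le> Cr" unfolding cx_def cy_def Cr_def by (smt (verit))+
    have I: "\<bar>Ic a bb cx - Ic a bb cy\<bar> \<le> \<bar>\<sigma> * \<rho>\<bar> * \<bar>x - y\<bar> * (4 * Cr + 2 * K)"
    proof -
      have "\<bar>Ic a bb cx - Ic a bb cy\<bar> \<le> \<bar>cx - cy\<bar> * (2 * \<bar>cx\<bar> + 2 * \<bar>cy\<bar> + 2 * K)"
        unfolding K_def by (rule Ic_lip[OF ab'])
      also have "\<dots> \<le> \<bar>cx - cy\<bar> * (4 * Cr + 2 * K)"
        using cb by (intro mult_left_mono) auto
      finally show ?thesis unfolding cxy .
    qed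
    have sq: "\<bar>x^2 - y^2\<bar> \<le> \<bar>x - y\<bar> * (2 * \<bar>R\<bar>)"
    proof -
      have "\<bar>x^2 - y^2\<bar> \<le> \<bar>x - y\<bar> * (\<bar>x\<bar> + \<bar>y\<bar>)" by (rule sq_lip)
      also have "\<dots> \<le> \<bar>x - y\<bar> * (2 * \<bar>R\<bar>)" using x y by (intro mult_left_mono) auto
      finally show ?thesis .
    qed
    have "rhs_c \<eta> \<kappa> \<sigma> \<rho> b \<alpha> \<beta> x - rhs_c \<eta> \<kappa> \<sigma> \<rho> b \<alpha> \<beta> y
       = (- \<kappa> * x - - \<kappa> * y) + (1/2 * \<sigma>^2 * x^2 - 1/2 * \<sigma>^2 * y^2) + (1/2 * k * Ic a bb cx - 1/2 * k * Ic a bb cy)"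
      unfolding rhs_c_eq[OF b ab] a_def[symmetric] bb_def[symmetric] cx_def[symmetric] cy_def[symmetric] k_def[symmetric]
      by linarith
    also have "\<dots> = (- \<kappa>) * (x - y) + (1/2 * \<sigma>^2) * (x^2 - y^2) + (1/2 * k) * (Ic a bb cx - Ic a bb cy)"
      by (simp only: right_diff_distrib mult.assoc)
    finally have eq: "rhs_c \<eta> \<kappa> \<sigma> \<rho> b \<alpha> \<beta> x - rhs_c \<eta> \<kappa> \<sigma> \<rho> b \<alpha> \<beta> y
       = (- \<kappa>) * (x - y) + (1/2 * \<sigma>^2) * (x^2 - y^2) + (1/2 * k) * (Ic a bb cx - Ic a bb cy)" .
    have "\<bar>rhs_c \<eta> \<kappa> \<sigma> \<rho> b \<alpha> \<beta> x - rhs_c \<eta> \<kappa> \<sigma> \<rho> b \<alpha> \<beta> y\<bar>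
       \<le> \<bar>(- \<kappa>) * (x - y)\<bar> + \<bar>(1/2 * \<sigma>^2) * (x^2 - y^2)\<bar> + \<bar>(1/2 * k) * (Ic a bb cx - Ic a bb cy)\<bar>"
      unfolding eq by (rule order_trans[OF abs_triangle_ineq add_right_mono[OF abs_triangle_ineq]])
    also have "\<dots> = \<bar>\<kappa>\<bar> * \<bar>x - y\<bar> + 1/2 * \<sigma>^2 * \<bar>x^2 - y^2\<bar> + 1/2 * \<bar>k\<bar> * \<bar>Ic a bb cx - Ic a bb cy\<bar>"
      by (simp add: abs_mult)
    also have "\<dots> \<le> \<bar>\<kappa>\<bar> * \<bar>x - y\<bar> + 1/2 * \<sigma>^2 * (\<bar>x - y\<bar> * (2 * \<bar>R\<bar>))
        + 1/2 * \<bar>k\<bar> * (\<bar>\<sigma> * \<rho>\<bar> * \<bar>x - y\<bar> * (4 * Cr + 2 * K))"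
      using sq I by (intro add_mono mult_left_mono order_refl) auto
    also have "\<dots> = L * \<bar>x - y\<bar>" unfolding L_def by (simp add: algebra_simps)
    finally show ?thesis .
  qed
  thus ?thesis using L0 by blast
qed


lemma sol_bound:
  fixes B f :: "real \<Rightarrow> real"
  assumes d: "\<forall>\<tau>\<in>{0..T}. (B has_real_derivative f (B \<tau>)) (at \<tau> within {0..T})"
  shows "\<exists>R>0. \<forall>\<tau>\<in>{0..T}. \<bar>B \<tau>\<bar> \<le> R"
proof -
  have cB: "continuous_on {0..T} B"
    using d by (auto simp: continuous_on_eq_continuous_within intro: DERIV_continuous)
  have "compact (B ` {0..T})" by (rule compact_continuous_image[OF cB]) simp
  hence "bounded (B ` {0..T})" by (rule compact_imp_bounded)
  then obtain R where "R > 0" "\<forall>x\<in>B ` {0..T}. norm x \<le> R" unfolding bounded_pos by blast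
  thus ?thesis by auto
qed

lemma rhs_u_lip:
  assumes R: "R \<ge> 0"
  shows "\<exists>L\<ge>0. \<forall>x y. \<bar>x\<bar> \<le> R \<longrightarrow> \<bar>y\<bar> \<le> R \<longrightarrow>
     \<bar>rhs_u \<eta> \<kappa> \<sigma> \<rho> b x - rhs_u \<eta> \<kappa> \<sigma> \<rho> b y\<bar> \<le> L * \<bar>x - y\<bar>"
proof -
  define p where "p = r1 \<eta> \<kappa> \<sigma> \<rho> b"
  define q where "q = r2 \<sigma> \<rho> b"
  define L where "L = \<bar>p\<bar> + 1/2 * \<bar>q\<bar> * (2 * R)"
  have L0: "L \<ge> 0" unfolding L_def using R by simp
  have "\<bar>rhs_u \<eta> \<kappa> \<sigma> \<rho> b x - rhs_u \<eta> \<kappa> \<sigma> \<rho> b y\<bar> \<le> L * \<bar>x - y\<bar>"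
    if x: "\<bar>x\<bar> \<le> R" and y: "\<bar>y\<bar> \<le> R" for x y
  proof -
    have "rhs_u \<eta> \<kappa> \<sigma> \<rho> b x - rhs_u \<eta> \<kappa> \<sigma> \<rho> b y = (p * x - p * y) + (1/2 * q * x^2 - 1/2 * q * y^2)"
      unfolding rhs_u_def p_def[symmetric] q_def[symmetric] by linarith
    also have "\<dots> = p * (x - y) + (1/2 * q) * (x^2 - y^2)" by (simp only: right_diff_distrib mult.assoc)
    finally have eq: "rhs_u \<eta> \<kappa> \<sigma> \<rho> b x - rhs_u \<eta> \<kappa> \<sigma> \<rho> b y = p * (x - y) + (1/2 * q) * (x^2 - y^2)" .
    have sq: "\<bar>x^2 - y^2\<bar> \<le> \<bar>x - y\<bar> * (2 * R)"
    proof -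
      have "\<bar>x^2 - y^2\<bar> \<le> \<bar>x - y\<bar> * (\<bar>x\<bar> + \<bar>y\<bar>)" by (rule sq_lip)
      also have "\<dots> \<le> \<bar>x - y\<bar> * (2 * R)" using x y by (intro mult_left_mono) auto
      finally show ?thesis .
    qed
    have "\<bar>rhs_u \<eta> \<kappa> \<sigma> \<rho> b x - rhs_u \<eta> \<kappa> \<sigma> \<rho> b y\<bar> \<le> \<bar>p * (x - y)\<bar> + \<bar>(1/2 * q) * (x^2 - y^2)\<bar>"
      unfolding eq by (rule abs_triangle_ineq)
    also have "\<dots> = \<bar>p\<bar> * \<bar>x - y\<bar> + 1/2 * \<bar>q\<bar> * \<bar>x^2 - y^2\<bar>" by (simp add: abs_mult)
    also have "\<dots> \<le> \<bar>p\<bar> * \<bar>x - y\<bar> + 1/2 * \<bar>q\<bar> * (\<bar>x - y\<bar> * (2 * R))"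
      using sq by (intro add_left_mono mult_left_mono) auto
    also have "\<dots> = L * \<bar>x - y\<bar>" unfolding L_def by (simp add: algebra_simps)
    finally show ?thesis .
  qed
  thus ?thesis using L0 by blast
qed

lemma deriv_rev:
  fixes B f :: "real \<Rightarrow> real"
  assumes d: "\<forall>\<tau>\<in>{0..T}. (B has_real_derivative f (B \<tau>)) (at \<tau> within {0..T})"
    and t: "t \<in> {0..T}"
  shows "((\<lambda>t. B (T - t)) has_real_derivative (f (B (T - t)) * -1)) (at t within {0..T})"
proof -
  have img: "(\<lambda>t. T - t) ` {0..T} = {0..T}"
  proof
    show "(\<lambda>t. T - t) ` {0..T} \<subseteq> {0..T}" by auto
    show "{0..T} \<subseteq> (\<lambda>t. T - t) ` {0..T}"
    proof
      fix x assume "x \<in> {0..T}"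
      thus "x \<in> (\<lambda>t. T - t) ` {0..T}" by (intro image_eqI[of _ _ "T - x"]) auto
    qed
  qed
  have "T - t \<in> {0..T}" using t by auto
  hence dB: "(B has_real_derivative f (B (T - t))) (at ((\<lambda>t. T - t) t) within ((\<lambda>t. T - t) ` {0..T}))"
    using d img by simp
  have dg: "((\<lambda>t. T - t) has_real_derivative -1) (at t within {0..T})"
    by (auto intro!: derivative_eq_intros)
  from DERIV_image_chain[OF dB dg] show ?thesis by (simp add: o_def)
qed

lemma pi_deriv_sign:
  fixes B f :: "real \<Rightarrow> real"
  assumes d: "\<forall>\<tau>\<in>{0..T}. (B has_real_derivative f (B \<tau>)) (at \<tau> within {0..T})"
    and sg: "\<forall>s\<in>{0..T}. sgn (f (B s)) = sgn b" and b: "b < 1" and \<sigma>: "\<sigma> > 0"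
    and t: "t \<in> {0..T}"
  shows "\<exists>D. ((\<lambda>t. 1 / (1 - b) * (\<eta> + \<sigma> * \<rho> * B (T - t))) has_real_derivative D) (at t within {0..T})
                 \<and> sgn D = - sgn (\<rho> * b)"
proof -
  have hB: "((\<lambda>t. B (T - t)) has_real_derivative (f (B (T - t)) * -1)) (at t within {0..T})"
    by (rule deriv_rev[OF d t])
  have "((\<lambda>t. 1 / (1 - b) * (\<eta> + \<sigma> * \<rho> * B (T - t))) has_real_derivative
      1 / (1 - b) * (0 + \<sigma> * \<rho> * (f (B (T - t)) * -1))) (at t within {0..T})"
    by (rule DERIV_cmult[OF DERIV_add[OF DERIV_const DERIV_cmult[OF hB]]])
  moreover have "sgn (1 / (1 - b) * (0 + \<sigma> * \<rho> * (f (B (T - t)) * -1))) = - sgn (\<rho> * b)"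
  proof -
    have "T - t \<in> {0..T}" using t by auto
    hence s: "sgn (f (B (T - t))) = sgn b" using sg by auto
    have "sgn (1 / (1 - b) * (0 + \<sigma> * \<rho> * (f (B (T - t)) * -1)))
        = sgn (1 / (1 - b)) * (sgn \<sigma> * sgn \<rho> * (sgn (f (B (T - t))) * sgn (-1::real)))"
      by (simp add: sgn_mult)
    also have "\<dots> = - (sgn \<rho> * sgn b)" using b \<sigma> s by simp
    finally show ?thesis by (simp add: sgn_mult)
  qed
  ultimately show ?thesis by blast
qed

lemma sol_nonpos:
  fixes B f :: "real \<Rightarrow> real"
  assumes d: "\<forall>\<tau>\<in>{0..T}. (B has_real_derivative f (B \<tau>)) (at \<tau> within {0..T})"
    and sg: "\<forall>s\<in>{0..T}. sgn (f (B s)) = sgn b" and b: "b < 0" and B0: "B 0 = 0"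
    and s: "s \<in> {0..T}"
  shows "B s \<le> 0"
proof -
  have "\<forall>\<tau>\<in>{0..T}. ((\<lambda>t. - B t) has_real_derivative - f (B \<tau>)) (at \<tau> within {0..T})"
    using d by (auto intro!: derivative_eq_intros)
  moreover have "\<forall>\<tau>\<in>{0..T}. - f (B \<tau>) \<ge> 0"
  proof
    fix \<tau> assume "\<tau> \<in> {0..T}"
    hence "sgn (f (B \<tau>)) = -1" using sg b by auto
    thus "- f (B \<tau>) \<ge> 0" by (simp add: sgn_if split: if_splits)
  qed
  ultimately have "- B 0 \<le> - B s" using s by (intro mono_deriv[of T "\<lambda>t. - B t" "\<lambda>\<tau>. - f (B \<tau>)"]) auto
  thus ?thesis using B0 by simp
qed

theorem corollary2p11:
  fixes T \<eta> \<kappa> \<sigma> \<rho> b :: real and \<alpha> \<beta> :: ereal and B Bu :: "real \<Rightarrow> real"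
  assumes T: "T > 0" and \<eta>: "\<eta> > 0" and \<kappa>: "\<kappa> > 0" and \<sigma>: "\<sigma> > 0"
    and \<rho>: "-1 < \<rho>" "\<rho> < 1" and b: "b < 1" "b \<noteq> 0"
    and K: "\<alpha> < \<beta>"
    and B_ode: "B 0 = 0"
      "\<forall>\<tau>\<in>{0..T}. (B has_real_derivative rhs_c \<eta> \<kappa> \<sigma> \<rho> b \<alpha> \<beta> (B \<tau>)) (at \<tau> within {0..T})"
    and Bu_ode: "Bu 0 = 0"
      "\<forall>\<tau>\<in>{0..T}. (Bu has_real_derivative rhs_u \<eta> \<kappa> \<sigma> \<rho> b (Bu \<tau>)) (at \<tau> within {0..T})"
  shows
    "((0 < pi_M \<eta> b \<and> ereal (pi_M \<eta> b) = \<alpha> / 2 \<and> ereal (pi_M \<eta> b) < \<alpha> \<and>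
      (\<exists>t0\<in>{0..T}. \<alpha> < ereal (pi_u \<eta> \<sigma> \<rho> b T Bu t0) \<and> ereal (pi_u \<eta> \<sigma> \<rho> b T Bu t0) < \<beta>))
     \<longrightarrow> (\<forall>\<tau>\<in>{0..T}. B \<tau> = 0)
       \<and> (\<forall>t\<in>{0..T}. ereal (pi_star \<eta> \<sigma> \<rho> b \<alpha> \<beta> T B t) = \<alpha>)
       \<and> \<not> (\<forall>t\<in>{0..T}. pi_star \<eta> \<sigma> \<rho> b \<alpha> \<beta> T B t = Cap (pi_u \<eta> \<sigma> \<rho> b T Bu t) \<alpha> \<beta>))
   \<and>
    ((ereal (pi_M \<eta> b) > \<beta> \<and> \<beta> > 0)
     \<longrightarrow> (\<forall>t\<in>{0..T}.
            (\<exists>D. (pi_hat \<eta> \<sigma> \<rho> b T B has_real_derivative D) (at t within {0..T})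
                 \<and> sgn D = - sgn (\<rho> * b))
          \<and> (\<exists>D. (pi_u \<eta> \<sigma> \<rho> b T Bu has_real_derivative D) (at t within {0..T})
                 \<and> sgn D = - sgn (\<rho> * b)))
       \<and> (b < 0 \<and> \<rho> < 0 \<longrightarrow>
            (\<forall>t\<in>{0..T}. pi_star \<eta> \<sigma> \<rho> b \<alpha> \<beta> T B t = Cap (pi_u \<eta> \<sigma> \<rho> b T Bu t) \<alpha> \<beta>)))"
  proof -
  obtain R where R: "R > 0" "\<forall>\<tau>\<in>{0..T}. \<bar>B \<tau>\<bar> \<le> R" using sol_bound[OF B_ode(2)] by blast
  obtain L where L: "L \<ge> 0" "\<forall>x y. \<bar>x\<bar> \<le> R \<longrightarrow> \<bar>y\<bar> \<le> R \<longrightarrow>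
     \<bar>rhs_c \<eta> \<kappa> \<sigma> \<rho> b \<alpha> \<beta> x - rhs_c \<eta> \<kappa> \<sigma> \<rho> b \<alpha> \<beta> y\<bar> \<le> L * \<bar>x - y\<bar>"
    using rhs_c_lip[OF b(1) K, of R] by blast
  obtain Ru where Ru: "Ru > 0" "\<forall>\<tau>\<in>{0..T}. \<bar>Bu \<tau>\<bar> \<le> Ru" using sol_bound[OF Bu_ode(2)] by blast
  obtain Lu where Lu: "Lu \<ge> 0" "\<forall>x y. \<bar>x\<bar> \<le> Ru \<longrightarrow> \<bar>y\<bar> \<le> Ru \<longrightarrow>
     \<bar>rhs_u \<eta> \<kappa> \<sigma> \<rho> b x - rhs_u \<eta> \<kappa> \<sigma> \<rho> b y\<bar> \<le> Lu * \<bar>x - y\<bar>"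
    using rhs_u_lip[of Ru] Ru(1) by fastforce
  have p: "1 - b > 0" using b by simp
  show ?thesis
  proof (intro conjI)
    show "(0 < pi_M \<eta> b \<and> ereal (pi_M \<eta> b) = \<alpha> / 2 \<and> ereal (pi_M \<eta> b) < \<alpha> \<and>
      (\<exists>t0\<in>{0..T}. \<alpha> < ereal (pi_u \<eta> \<sigma> \<rho> b T Bu t0) \<and> ereal (pi_u \<eta> \<sigma> \<rho> b T Bu t0) < \<beta>))
     \<longrightarrow> (\<forall>\<tau>\<in>{0..T}. B \<tau> = 0)
       \<and> (\<forall>t\<in>{0..T}. ereal (pi_star \<eta> \<sigma> \<rho> b \<alpha> \<beta> T B t) = \<alpha>)
       \<and> \<not> (\<forall>t\<in>{0..T}. pi_star \<eta> \<sigma> \<rho> b \<alpha> \<beta> T B t = Cap (pi_u \<eta> \<sigma> \<rho> b T Bu t) \<alpha> \<beta>)"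
    proof (rule impI)
      assume H: "0 < pi_M \<eta> b \<and> ereal (pi_M \<eta> b) = \<alpha> / 2 \<and> ereal (pi_M \<eta> b) < \<alpha> \<and>
      (\<exists>t0\<in>{0..T}. \<alpha> < ereal (pi_u \<eta> \<sigma> \<rho> b T Bu t0) \<and> ereal (pi_u \<eta> \<sigma> \<rho> b T Bu t0) < \<beta>)"
      have \<alpha>: "\<alpha> = ereal (2 * \<eta> / (1 - b))"
      proof (cases \<alpha>)
        case (real ra)
        thus ?thesis using H by (simp add: pi_M_def) (metis mult.commute)
      next
        case PInf thus ?thesis using H by simp
      next
        case MInf thus ?thesis using H by simp
      qed
      have a: "ereal (1 - b) * \<alpha> = ereal (2 * \<eta>)" using \<alpha> p by simp
      have f0: "rhs_c \<eta> \<kappa> \<sigma> \<rho> b \<alpha> \<beta> 0 = 0"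
        unfolding rhs_c_eq[OF b(1) K] a Ic_def clampE_def using \<eta> by simp
      have Bz: "\<forall>\<tau>\<in>{0..T}. B \<tau> = 0"
      proof (rule fwd_unique[OF B_ode(2) L(1) _ R(2) B_ode(1)])
        show "\<forall>x. \<bar>x\<bar> \<le> R \<longrightarrow> \<bar>rhs_c \<eta> \<kappa> \<sigma> \<rho> b \<alpha> \<beta> x\<bar> \<le> L * \<bar>x\<bar>"
          using L(2) R(1) f0 by (metis abs_zero diff_zero less_imp_le)
      qed
      have Bm: "Bminus \<eta> \<sigma> b \<alpha> = ereal (\<eta> / \<sigma>)"
        unfolding Bminus_def a using \<sigma> by simp
      have Bp: "\<not> ereal 0 > Bplus \<eta> \<sigma> b \<beta>"
      proof (cases \<beta>)
        case (real rb)
        hence "2 * \<eta> / (1 - b) < rb" using K \<alpha> by simp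
        hence "2 * \<eta> < (1 - b) * rb" using p by (simp add: pos_divide_less_eq mult.commute)
        hence "0 \<le> ((1 - b) * rb - \<eta>) / \<sigma>" using \<eta> \<sigma> by simp
        thus ?thesis unfolding Bplus_def real using \<sigma> by simp
      next
        case PInf thus ?thesis unfolding Bplus_def using p \<sigma> by simp
      next
        case MInf thus ?thesis using K by simp
      qed
      have ls: "lambda_star \<eta> \<sigma> \<rho> b \<alpha> \<beta> 0 = \<eta>"
        unfolding lambda_star_def Bm a using Bp \<eta> \<sigma> by simp
      have ps: "pi_star \<eta> \<sigma> \<rho> b \<alpha> \<beta> T B t = 2 * \<eta> / (1 - b)" if "t \<in> {0..T}" for t
      proof -
        have "B (T - t) = 0" using Bz that by auto
        thus ?thesis unfolding pi_star_def using ls by simp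
      qed
      have P2: "\<forall>t\<in>{0..T}. ereal (pi_star \<eta> \<sigma> \<rho> b \<alpha> \<beta> T B t) = \<alpha>" using ps \<alpha> by simp
      obtain t0 where t0: "t0 \<in> {0..T}" "\<alpha> < ereal (pi_u \<eta> \<sigma> \<rho> b T Bu t0)" "ereal (pi_u \<eta> \<sigma> \<rho> b T Bu t0) < \<beta>"
        using H by blast
      have "Cap (pi_u \<eta> \<sigma> \<rho> b T Bu t0) \<alpha> \<beta> = pi_u \<eta> \<sigma> \<rho> b T Bu t0"
        unfolding Cap_def using t0 by auto
      moreover have "pi_star \<eta> \<sigma> \<rho> b \<alpha> \<beta> T B t0 \<noteq> pi_u \<eta> \<sigma> \<rho> b T Bu t0"
        using t0 P2 by force
      ultimately have P3: "\<not> (\<forall>t\<in>{0..T}. pi_star \<eta> \<sigma> \<rho> b \<alpha> \<beta> T B t = Cap (pi_u \<eta> \<sigma> \<rho> b T Bu t) \<alpha> \<beta>)"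
        using t0(1) by metis
      show "(\<forall>\<tau>\<in>{0..T}. B \<tau> = 0)
       \<and> (\<forall>t\<in>{0..T}. ereal (pi_star \<eta> \<sigma> \<rho> b \<alpha> \<beta> T B t) = \<alpha>)
       \<and> \<not> (\<forall>t\<in>{0..T}. pi_star \<eta> \<sigma> \<rho> b \<alpha> \<beta> T B t = Cap (pi_u \<eta> \<sigma> \<rho> b T Bu t) \<alpha> \<beta>)"
        using Bz P2 P3 by blast
    qed
  next
    show "(ereal (pi_M \<eta> b) > \<beta> \<and> \<beta> > 0)
     \<longrightarrow> (\<forall>t\<in>{0..T}.
            (\<exists>D. (pi_hat \<eta> \<sigma> \<rho> b T B has_real_derivative D) (at t within {0..T})
                 \<and> sgn D = - sgn (\<rho> * b))
          \<and> (\<exists>D. (pi_u \<eta> \<sigma> \<rho> b T Bu has_real_derivative D) (at t within {0..T})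
                 \<and> sgn D = - sgn (\<rho> * b)))
       \<and> (b < 0 \<and> \<rho> < 0 \<longrightarrow>
            (\<forall>t\<in>{0..T}. pi_star \<eta> \<sigma> \<rho> b \<alpha> \<beta> T B t = Cap (pi_u \<eta> \<sigma> \<rho> b T Bu t) \<alpha> \<beta>))"
    proof (rule impI)
      assume H: "ereal (pi_M \<eta> b) > \<beta> \<and> \<beta> > 0"
      obtain rb where rb: "\<beta> = ereal rb" using H by (cases \<beta>) auto
      have rb0: "0 < rb" "rb < \<eta> / (1 - b)" using H rb by (auto simp: pi_M_def)
      define P where "P = (1 - b) * rb"
      have P: "0 < P" "P < \<eta>" using rb0 p unfolding P_def by (auto simp: pos_less_divide_eq mult.commute)
      have bb: "ereal (1 - b) * \<beta> = ereal P" unfolding rb P_def by simp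
      have ab: "ereal (1 - b) * \<alpha> < ereal P" unfolding bb[symmetric] using K p
        by (intro ereal_mult_strict_left_mono) auto
      have cl: "clampE (ereal (1 - b) * \<alpha>) (ereal P) \<eta> = P"
      proof -
        have "ereal P < ereal \<eta>" using P by simp
        hence nlo: "\<not> ereal \<eta> < ereal (1 - b) * \<alpha>" using ab by (meson order.asym order.strict_trans)
        show ?thesis unfolding clampE_def using nlo P by simp
      qed
      have I0: "rhs_c \<eta> \<kappa> \<sigma> \<rho> b \<alpha> \<beta> 0 = 1/2 * (b / (1 - b)) * (\<eta>^2 - (\<eta> - P)^2)"
        unfolding rhs_c_eq[OF b(1) K] bb Ic_def using cl by simp
      have Ipos: "\<eta>^2 - (\<eta> - P)^2 > 0"
      proof -
        have "\<eta>^2 - (\<eta> - P)^2 = P * (2 * \<eta> - P)" by (simp add: power2_eq_square algebra_simps)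
        thus ?thesis using P by simp
      qed
      have sf0: "sgn (rhs_c \<eta> \<kappa> \<sigma> \<rho> b \<alpha> \<beta> (B 0)) = sgn b"
        unfolding B_ode(1) I0 using Ipos p by (simp add: sgn_mult)
      have sg: "\<forall>s\<in>{0..T}. sgn (rhs_c \<eta> \<kappa> \<sigma> \<rho> b \<alpha> \<beta> (B s)) = sgn b"
      proof
        fix s assume s: "s \<in> {0..T}"
        have "rhs_c \<eta> \<kappa> \<sigma> \<rho> b \<alpha> \<beta> (B 0) \<noteq> 0" using sf0 b(2) by (auto simp: sgn_if split: if_splits)
        thus "sgn (rhs_c \<eta> \<kappa> \<sigma> \<rho> b \<alpha> \<beta> (B s)) = sgn b"
          using sign_const[OF B_ode(2) L R(2) s] sf0 by simp
      qed
      have sfu0: "sgn (rhs_u \<eta> \<kappa> \<sigma> \<rho> b (Bu 0)) = sgn b"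
        unfolding Bu_ode(1) rhs_u_def r0_def using p \<eta> by (simp add: sgn_mult)
      have sgu: "\<forall>s\<in>{0..T}. sgn (rhs_u \<eta> \<kappa> \<sigma> \<rho> b (Bu s)) = sgn b"
      proof
        fix s assume s: "s \<in> {0..T}"
        have "rhs_u \<eta> \<kappa> \<sigma> \<rho> b (Bu 0) \<noteq> 0" using sfu0 b(2) by (auto simp: sgn_if split: if_splits)
        thus "sgn (rhs_u \<eta> \<kappa> \<sigma> \<rho> b (Bu s)) = sgn b"
          using sign_const[OF Bu_ode(2) Lu Ru(2) s] sfu0 by simp
      qed
      have D1: "\<forall>t\<in>{0..T}.
            (\<exists>D. (pi_hat \<eta> \<sigma> \<rho> b T B has_real_derivative D) (at t within {0..T})
                 \<and> sgn D = - sgn (\<rho> * b))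
          \<and> (\<exists>D. (pi_u \<eta> \<sigma> \<rho> b T Bu has_real_derivative D) (at t within {0..T})
                 \<and> sgn D = - sgn (\<rho> * b))"
        unfolding pi_hat_def[abs_def] pi_u_def[abs_def]
        using pi_deriv_sign[OF B_ode(2) sg b(1) \<sigma>] pi_deriv_sign[OF Bu_ode(2) sgu b(1) \<sigma>] by blast
      have D2: "\<forall>t\<in>{0..T}. pi_star \<eta> \<sigma> \<rho> b \<alpha> \<beta> T B t = Cap (pi_u \<eta> \<sigma> \<rho> b T Bu t) \<alpha> \<beta>"
        if neg: "b < 0" "\<rho> < 0"
      proof
        fix t assume t: "t \<in> {0..T}"
        hence Tt: "T - t \<in> {0..T}" by auto
        have x: "B (T - t) \<le> 0" by (rule sol_nonpos[OF B_ode(2) sg neg(1) B_ode(1) Tt])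
        have y: "Bu (T - t) \<le> 0" by (rule sol_nonpos[OF Bu_ode(2) sgu neg(1) Bu_ode(1) Tt])
        have rx: "0 \<le> \<rho> * B (T - t)" using x neg by (simp add: mult_nonpos_nonpos)
        have Bp: "Bplus \<eta> \<sigma> b \<beta> < ereal (\<rho> * B (T - t))"
        proof -
          have "Bplus \<eta> \<sigma> b \<beta> = ereal ((P - \<eta>) / \<sigma>)" unfolding Bplus_def bb using \<sigma> by simp
          moreover have "(P - \<eta>) / \<sigma> < 0" using P \<sigma> by (simp add: divide_neg_pos)
          ultimately show ?thesis using rx by simp
        qed
        have Bm: "\<not> ereal (\<rho> * B (T - t)) < Bminus \<eta> \<sigma> b \<alpha>"
        proof (cases \<alpha>)
          case (real ra)
          hence "(1 - b) * ra < P" using ab by simp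
          hence "((1 - b) * ra - \<eta>) / \<sigma> < 0" using P \<sigma> by (simp add: divide_neg_pos)
          thus ?thesis unfolding Bminus_def real using rx \<sigma> by simp
        next
          case PInf thus ?thesis using K by simp
        next
          case MInf thus ?thesis unfolding Bminus_def using p \<sigma> by simp
        qed
        have "pi_star \<eta> \<sigma> \<rho> b \<alpha> \<beta> T B t = 1 / (1 - b) * P"
          unfolding pi_star_def lambda_star_def bb using Bp Bm by simp
        hence ps: "pi_star \<eta> \<sigma> \<rho> b \<alpha> \<beta> T B t = rb" unfolding P_def using p by simp
        have "\<eta> / (1 - b) \<le> pi_u \<eta> \<sigma> \<rho> b T Bu t"
        proof -
          have "0 \<le> \<sigma> * \<rho> * Bu (T - t)" using \<sigma> neg y
            by (metis mult_nonpos_nonpos less_imp_le mult_pos_neg mult_neg_neg zero_less_mult_iff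
                mult_nonneg_nonneg mult_nonneg_nonpos mult_le_0_iff)
          thus ?thesis unfolding pi_u_def using p by (simp add: divide_right_mono)
        qed
        hence gt: "rb < pi_u \<eta> \<sigma> \<rho> b T Bu t" using rb0 by simp
        have "Cap (pi_u \<eta> \<sigma> \<rho> b T Bu t) \<alpha> \<beta> = rb"
        proof -
          have "\<not> ereal (pi_u \<eta> \<sigma> \<rho> b T Bu t) < \<alpha>" using K gt rb by (metis less_ereal.simps(1) order.strict_trans not_less_iff_gr_or_eq)
          thus ?thesis unfolding Cap_def rb using gt by simp
        qed
        thus "pi_star \<eta> \<sigma> \<rho> b \<alpha> \<beta> T B t = Cap (pi_u \<eta> \<sigma> \<rho> b T Bu t) \<alpha> \<beta>" using ps by simp
      qed
      show "(\<forall>t\<in>{0..T}.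
            (\<exists>D. (pi_hat \<eta> \<sigma> \<rho> b T B has_real_derivative D) (at t within {0..T})
                 \<and> sgn D = - sgn (\<rho> * b))
          \<and> (\<exists>D. (pi_u \<eta> \<sigma> \<rho> b T Bu has_real_derivative D) (at t within {0..T})
                 \<and> sgn D = - sgn (\<rho> * b)))
       \<and> (b < 0 \<and> \<rho> < 0 \<longrightarrow>
            (\<forall>t\<in>{0..T}. pi_star \<eta> \<sigma> \<rho> b \<alpha> \<beta> T B t = Cap (pi_u \<eta> \<sigma> \<rho> b T Bu t) \<alpha> \<beta>))"
        using D1 D2 by blast
    qed
  qed
qed

end
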